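(* Assume Assumption A holds for the transition function $p$. Then for every $\delta\in(0,1)$, the set $NE_\delta$ of Nash equilibrium payoffs of the $\delta$-discounted dynamic sender-receiver game satisfies $NE_\delta\subseteq E(\mathcal{M})$.
   Context: A dynamic sender-receiver game is given by: finite sets $S$ (states), $A=S$ (messages) and $B$ (actions of the receiver); a payoff function $u=(u^1,u^2):S\times B\to\mathbb{R}^2$ (player 1 = sender, player 2 = receiver), extended to mixed actions linearly; and an irreducible aperiodic Markov chain on $S$ with transition function $p(\cdot\mid\cdot)$ and invariant measure $m\in\Delta(S)$. The states $(s_n)_{n\ge1}$ follow this chain with $s_1\sim m$. At each stage $n$ the sender observes $s_n$ and announces $a_n\in A$; the receiver observes $a_n$ and chooses $b_n\in B$; $b_n$ is publicly disclosed; payoffs are not observed. A sender strategy is a map $\sigma:\bigcup_{n\ge0}(S\times A\times B)^n\times S\to\Delta(A)$, a receiver strategy a map $\tau:\bigcup_{n\ge0}(A\times B)^n\to\Delta(B)$; payoffs are $\gamma_\delta(\sigma,\tau)=\mathbf{E}_{\sigma,\tau}[\sum_{n\ge1}(1-\delta)\delta^{n-1}u(s_n,b_n)]$. Assumption A: there exist nonnegative numbers $\alpha_s$, $s\in S$, with $\sum_{s\in S\setminus\{\bar s\}}\alpha_s\le1$ for every $\bar s\in S$, such that $p(s'\mid s)=\alpha_{s'}$ whenever $s'\neq s$. $\mathcal{M}\subset\Delta(S\times A)$ is the set of distributions on $S\times A$ both of whose marginals equal $m$; $\mu_0(s,s)=m(s)$, $\mu_0(s,a)=0$ for $s\ne a$.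 For $\mu\in\mathcal{M}$ and $y:A\to\Delta(B)$, $U(\mu,y)=\sum_{s,a}\mu(s,a)u(s,y(\cdot\mid a))$; $v^2=\max_{b\in B}\sum_s m(s)u^2(s,b)$. $E(\mathcal{M})$ is the set of vectors $U(\mu_0,y)$, $y:A\to\Delta(B)$, such that $U^1(\mu_0,y)\ge U^1(\mu,y)$ for every $\mu\in\mathcal{M}$ and $U^2(\mu_0,y)\ge v^2$. *)

theory Defs
  imports Complex_Main
begin

text \<open>States and messages both have type 's (A = S); receiver actions have type 'b.
  A transition function p s s' stands for p(s' | s).\<close>

definition stochastic_matrix :: "('s::finite \<Rightarrow> 's \<Rightarrow> real) \<Rightarrow> bool" where
  "stochastic_matrix p \<longleftrightarrow> (\<forall>s s'. 0 \<le> p s s') \<and> (\<forall>s. (\<Sum>s'\<in>UNIV. p s s') = 1)"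

fun nstep :: "('s::finite \<Rightarrow> 's \<Rightarrow> real) \<Rightarrow> nat \<Rightarrow> 's \<Rightarrow> 's \<Rightarrow> real" where
  "nstep p 0 s s' = (if s = s' then 1 else 0)"
| "nstep p (Suc n) s s' = (\<Sum>t\<in>UNIV. nstep p n s t * p t s')"

definition irreducible_chain :: "('s::finite \<Rightarrow> 's \<Rightarrow> real) \<Rightarrow> bool" where
  "irreducible_chain p \<longleftrightarrow> (\<forall>s s'. \<exists>n>0. nstep p n s s' > 0)"

definition aperiodic_chain :: "('s::finite \<Rightarrow> 's \<Rightarrow> real) \<Rightarrow> bool" where
  "aperiodic_chain p \<longleftrightarrow> (\<forall>s. Gcd {n. n > 0 \<and> nstep p n s s > 0} = 1)"

definition distribution :: "('a::finite \<Rightarrow> real) \<Rightarrow> bool" where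
  "distribution q \<longleftrightarrow> (\<forall>x. 0 \<le> q x) \<and> (\<Sum>x\<in>UNIV. q x) = 1"

definition invariant_measure :: "('s::finite \<Rightarrow> 's \<Rightarrow> real) \<Rightarrow> ('s \<Rightarrow> real) \<Rightarrow> bool" where
  "invariant_measure p m \<longleftrightarrow> distribution m \<and> (\<forall>s'. (\<Sum>s\<in>UNIV. m s * p s s') = m s')"

definition assumption_A :: "('s::finite \<Rightarrow> 's \<Rightarrow> real) \<Rightarrow> bool" where
  "assumption_A p \<longleftrightarrow> (\<exists>\<alpha>::'s \<Rightarrow> real. (\<forall>s. 0 \<le> \<alpha> s)
      \<and> (\<forall>sb. (\<Sum>s\<in>UNIV - {sb}. \<alpha> s) \<le> 1)
      \<and> (\<forall>s s'. s' \<noteq> s \<longrightarrow> p s s' = \<alpha> s'))"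

text \<open>Histories: lists of (state, message, action) triples. A sender strategy maps a past
  history and the current state to a distribution over messages; a receiver strategy maps the
  past public history of (message, action) pairs and the current message to a distribution over
  actions.\<close>

type_synonym ('s,'b) sender_strategy = "('s \<times> 's \<times> 'b) list \<Rightarrow> 's \<Rightarrow> 's \<Rightarrow> real"
type_synonym ('s,'b) receiver_strategy = "('s \<times> 'b) list \<Rightarrow> 's \<Rightarrow> 'b \<Rightarrow> real"

definition sender_strategy :: "('s::finite,'b) sender_strategy \<Rightarrow> bool" where
  "sender_strategy \<sigma> \<longleftrightarrow> (\<forall>h s. distribution (\<sigma> h s))"

definition receiver_strategy :: "('s,'b::finite) receiver_strategy \<Rightarrow> bool" where
  "receiver_strategy \<tau> \<longleftrightarrow> (\<forall>h a. distribution (\<tau> h a))"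

definition public_hist :: "('s \<times> 's \<times> 'b) list \<Rightarrow> ('s \<times> 'b) list" where
  "public_hist h = map (\<lambda>(s,a,b). (a,b)) h"

definition hist_prob ::
  "('s::finite \<Rightarrow> 's \<Rightarrow> real) \<Rightarrow> ('s \<Rightarrow> real) \<Rightarrow> ('s,'b) sender_strategy \<Rightarrow> ('s,'b) receiver_strategy
     \<Rightarrow> ('s \<times> 's \<times> 'b) list \<Rightarrow> real" where
  "hist_prob p m \<sigma> \<tau> h = (\<Prod>k<length h.
      (if k = 0 then m (fst (h ! 0)) else p (fst (h ! (k - 1))) (fst (h ! k)))
      * \<sigma> (take k h) (fst (h ! k)) (fst (snd (h ! k)))
      * \<tau> (public_hist (take k h)) (fst (snd (h ! k))) (snd (snd (h ! k))))"

text \<open>Expected stage payoff at stage n+1 and the discounted payoff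
  E[sum_{n>=1} (1-delta) delta^(n-1) u(s_n,b_n)], written (by linearity, payoffs bounded)
  as the series of the expected stage payoffs.\<close>

definition stage_payoff ::
  "('s::finite \<Rightarrow> 's \<Rightarrow> real) \<Rightarrow> ('s \<Rightarrow> real) \<Rightarrow> ('s \<Rightarrow> 'b::finite \<Rightarrow> real)
     \<Rightarrow> ('s,'b) sender_strategy \<Rightarrow> ('s,'b) receiver_strategy \<Rightarrow> nat \<Rightarrow> real" where
  "stage_payoff p m v \<sigma> \<tau> n =
     (\<Sum>h\<in>{h :: ('s \<times> 's \<times> 'b) list. length h = Suc n}.
        hist_prob p m \<sigma> \<tau> h * v (fst (last h)) (snd (snd (last h))))"

definition disc_payoff ::
  "('s::finite \<Rightarrow> 's \<Rightarrow> real) \<Rightarrow> ('s \<Rightarrow> real) \<Rightarrow> real \<Rightarrow> ('s \<Rightarrow> 'b::finite \<Rightarrow> real)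
     \<Rightarrow> ('s,'b) sender_strategy \<Rightarrow> ('s,'b) receiver_strategy \<Rightarrow> real" where
  "disc_payoff p m \<delta> v \<sigma> \<tau> = (\<Sum>n. (1 - \<delta>) * \<delta> ^ n * stage_payoff p m v \<sigma> \<tau> n)"

definition nash_eq ::
  "('s::finite \<Rightarrow> 's \<Rightarrow> real) \<Rightarrow> ('s \<Rightarrow> real) \<Rightarrow> real \<Rightarrow> ('s \<Rightarrow> 'b::finite \<Rightarrow> real) \<Rightarrow> ('s \<Rightarrow> 'b \<Rightarrow> real)
     \<Rightarrow> ('s,'b) sender_strategy \<Rightarrow> ('s,'b) receiver_strategy \<Rightarrow> bool" where
  "nash_eq p m \<delta> u1 u2 \<sigma> \<tau> \<longleftrightarrow> sender_strategy \<sigma> \<and> receiver_strategy \<tau>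
     \<and> (\<forall>\<sigma>'. sender_strategy \<sigma>' \<longrightarrow> disc_payoff p m \<delta> u1 \<sigma>' \<tau> \<le> disc_payoff p m \<delta> u1 \<sigma> \<tau>)
     \<and> (\<forall>\<tau>'. receiver_strategy \<tau>' \<longrightarrow> disc_payoff p m \<delta> u2 \<sigma> \<tau>' \<le> disc_payoff p m \<delta> u2 \<sigma> \<tau>)"

definition NE ::
  "('s::finite \<Rightarrow> 's \<Rightarrow> real) \<Rightarrow> ('s \<Rightarrow> real) \<Rightarrow> real \<Rightarrow> ('s \<Rightarrow> 'b::finite \<Rightarrow> real) \<Rightarrow> ('s \<Rightarrow> 'b \<Rightarrow> real)
     \<Rightarrow> (real \<times> real) set" where
  "NE p m \<delta> u1 u2 = {(disc_payoff p m \<delta> u1 \<sigma> \<tau>, disc_payoff p m \<delta> u2 \<sigma> \<tau>) | \<sigma> \<tau>.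
      nash_eq p m \<delta> u1 u2 \<sigma> \<tau>}"

definition Mset :: "('s::finite \<Rightarrow> real) \<Rightarrow> ('s \<Rightarrow> 's \<Rightarrow> real) set" where
  "Mset m = {\<mu>. (\<forall>s a. 0 \<le> \<mu> s a) \<and> (\<forall>s. (\<Sum>a\<in>UNIV. \<mu> s a) = m s)
                \<and> (\<forall>a. (\<Sum>s\<in>UNIV. \<mu> s a) = m a)}"

definition mu0 :: "('s \<Rightarrow> real) \<Rightarrow> 's \<Rightarrow> 's \<Rightarrow> real" where
  "mu0 m s a = (if s = a then m s else 0)"

definition Upay :: "('s::finite \<Rightarrow> 'b::finite \<Rightarrow> real) \<Rightarrow> ('s \<Rightarrow> 's \<Rightarrow> real) \<Rightarrow> ('s \<Rightarrow> 'b \<Rightarrow> real) \<Rightarrow> real" where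
  "Upay v \<mu> y = (\<Sum>s\<in>UNIV. \<Sum>a\<in>UNIV. \<mu> s a * (\<Sum>b\<in>UNIV. y a b * v s b))"

definition v2 :: "('s::finite \<Rightarrow> real) \<Rightarrow> ('s \<Rightarrow> 'b::finite \<Rightarrow> real) \<Rightarrow> real" where
  "v2 m u2 = Max (range (\<lambda>b. \<Sum>s\<in>UNIV. m s * u2 s b))"

definition EM :: "('s::finite \<Rightarrow> real) \<Rightarrow> ('s \<Rightarrow> 'b::finite \<Rightarrow> real) \<Rightarrow> ('s \<Rightarrow> 'b \<Rightarrow> real)
     \<Rightarrow> (real \<times> real) set" where
  "EM m u1 u2 = {(Upay u1 (mu0 m) y, Upay u2 (mu0 m) y) | y.
      (\<forall>a. distribution (y a))
      \<and> (\<forall>\<mu>\<in>Mset m. Upay u1 \<mu> y \<le> Upay u1 (mu0 m) y)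
      \<and> Upay u2 (mu0 m) y \<ge> v2 m u2}"

end

theory Submission
  imports Defs
begin


lemma finite_len: "finite {h::'a::finite list. length h = n}"
  using finite_lists_length_eq[of "UNIV::'a set" n] by simp

lemma len_Suc_image: "{h::'a list. length h = Suc n} = (\<lambda>(h,t). h @ [t]) ` ({h. length h = n} \<times> UNIV)"
proof
  show "{h::'a list. length h = Suc n} \<subseteq> (\<lambda>(h,t). h @ [t]) ` ({h. length h = n} \<times> UNIV)"
  proof
    fix h :: "'a list" assume "h \<in> {h. length h = Suc n}"
    then have "length h = Suc n" by simp
    then obtain h0 t where "h = h0 @ [t]" "length h0 = n" by (metis length_Suc_conv_rev)
    then show "h \<in> (\<lambda>(h,t). h @ [t]) ` ({h. length h = n} \<times> UNIV)" by force
  qed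
qed auto

lemma sum_len_Suc:
  fixes f :: "'a::finite list \<Rightarrow> 'b::comm_monoid_add"
  shows "(\<Sum>h\<in>{h. length h = Suc n}. f h) = (\<Sum>h\<in>{h. length h = n}. \<Sum>t\<in>UNIV. f (h @ [t]))"
proof -
  have inj: "inj_on (\<lambda>(h,t). h @ [t]) ({h::'a list. length h = n} \<times> UNIV)"
    by (auto simp: inj_on_def)
  have "(\<Sum>h\<in>{h. length h = Suc n}. f h) = (\<Sum>x\<in>({h. length h = n} \<times> UNIV). f ((\<lambda>(h,t). h @ [t]) x))"
    by (subst len_Suc_image, subst sum.reindex[OF inj]) (simp add: comp_def)
  also have "\<dots> = (\<Sum>(h,t)\<in>({h. length h = n} \<times> UNIV). f (h @ [t]))"
    by (rule sum.cong) auto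
  also have "\<dots> = (\<Sum>h\<in>{h. length h = n}. \<Sum>t\<in>UNIV. f (h @ [t]))"
    by (rule sum.cartesian_product[symmetric])
  finally show ?thesis .
qed

lemma len_0: "{h. length h = 0} = {[]}" by auto

lemma pair_sum: "(\<Sum>t\<in>(UNIV::('a::finite\<times>'b::finite) set). f t) = (\<Sum>x\<in>UNIV. \<Sum>y\<in>UNIV. f (x,y))"
proof -
  have "(\<Sum>x\<in>UNIV. \<Sum>y\<in>UNIV. f (x,y)) = (\<Sum>(x,y)\<in>(UNIV::'a set)\<times>(UNIV::'b set). f (x,y))"
    by (rule sum.cartesian_product)
  then show ?thesis by (simp add: split_def)
qed

lemma hist_prob_snoc:
  "hist_prob p m \<sigma> \<tau> (h @ [(s,a,b)]) = hist_prob p m \<sigma> \<tau> h *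
     ((if h = [] then m s else p (fst (last h)) s) * \<sigma> h s a * \<tau> (public_hist h) a b)"
proof -
  let ?x = "(s,a,b)"
  have A: "(\<Prod>k<length h. (if k = 0 then m (fst ((h@[?x]) ! 0)) else p (fst ((h@[?x]) ! (k - 1))) (fst ((h@[?x]) ! k)))
      * \<sigma> (take k (h@[?x])) (fst ((h@[?x]) ! k)) (fst (snd ((h@[?x]) ! k)))
      * \<tau> (public_hist (take k (h@[?x]))) (fst (snd ((h@[?x]) ! k))) (snd (snd ((h@[?x]) ! k))))
    = hist_prob p m \<sigma> \<tau> h"
    unfolding hist_prob_def
    by (rule prod.cong) (auto simp: nth_append)
  have B: "h \<noteq> [] \<Longrightarrow> h ! (length h - Suc 0) = last h" by (simp add: last_conv_nth)
  show ?thesis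
    unfolding hist_prob_def[of p m \<sigma> \<tau> "h @ [?x]"]
    apply (simp only: length_append_singleton prod.lessThan_Suc A)
    apply (cases "h = []")
     apply simp
    apply (simp add: nth_append B)
    done
qed

lemma public_hist_map: "public_hist h = map snd h"
  by (auto simp: public_hist_def intro!: map_cong)

lemma distr_le1: "distribution q \<Longrightarrow> q x \<le> 1"
  unfolding distribution_def
  by (metis finite_UNIV member_le_sum UNIV_I)

definition chain :: "('s::finite \<Rightarrow> 's \<Rightarrow> real) \<Rightarrow> ('s \<Rightarrow> real) \<Rightarrow> 's list \<Rightarrow> real" where
  "chain p m ss = (\<Prod>k<length ss. if k = 0 then m (ss!0) else p (ss!(k-1)) (ss!k))"

lemma chain_snoc: "chain p m (ss@[s]) = chain p m ss * (if ss = [] then m s else p (last ss) s)"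
proof -
  have A: "(\<Prod>k<length ss. if k = 0 then m ((ss@[s])!0) else p ((ss@[s])!(k-1)) ((ss@[s])!k)) = chain p m ss"
    unfolding chain_def by (rule prod.cong) (auto simp: nth_append)
  have B: "ss \<noteq> [] \<Longrightarrow> ss ! (length ss - Suc 0) = last ss" by (simp add: last_conv_nth)
  show ?thesis
    unfolding chain_def[of p m "ss @ [s]"]
    apply (simp only: length_append_singleton prod.lessThan_Suc A)
    apply (cases "ss = []")
     apply simp
    apply (simp add: nth_append B)
    done
qed

lemma chain_Nil[simp]: "chain p m [] = 1" by (simp add: chain_def)
lemma hist_prob_Nil[simp]: "hist_prob p m \<sigma> \<tau> [] = 1" by (simp add: hist_prob_def)

definition hp1 :: "('s::finite,'b) sender_strategy \<Rightarrow> ('s,'b) receiver_strategy \<Rightarrow> ('s \<times> 's \<times> 'b) list \<Rightarrow> real" where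
  "hp1 \<sigma> \<tau> h = hist_prob (\<lambda>_ _. 1) (\<lambda>_. 1) \<sigma> \<tau> h"

lemma hp1_snoc: "hp1 \<sigma> \<tau> (h @ [(s,a,b)]) = hp1 \<sigma> \<tau> h * (\<sigma> h s a * \<tau> (map snd h) a b)"
  unfolding hp1_def hist_prob_snoc public_hist_map by simp

lemma hist_prob_factor: "hist_prob p m \<sigma> \<tau> h = chain p m (map fst h) * hp1 \<sigma> \<tau> h"
proof (induction h rule: rev_induct)
  case Nil then show ?case by (simp add: hp1_def)
next
  case (snoc x h)
  obtain s a b where x: "x = (s,a,b)" by (cases x) auto
  have l: "h \<noteq> [] \<Longrightarrow> last (map fst h) = fst (last h)" by (simp add: last_map)
  show ?case using snoc l unfolding x hist_prob_snoc hp1_snoc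
    by (simp add: chain_snoc public_hist_map)
qed

definition Exf where
  "Exf p m \<sigma> \<tau> n f = (\<Sum>h\<in>{h. length h = Suc n}. hist_prob p m \<sigma> \<tau> h * f (fst (last h)) (snd (snd (last h))))"

locale G =
  fixes p :: "'s::finite \<Rightarrow> 's \<Rightarrow> real" and m :: "'s \<Rightarrow> real"
  assumes stoch: "stochastic_matrix p" and inv: "invariant_measure p m"
begin

lemma p_nonneg: "0 \<le> p s t" using stoch by (simp add: stochastic_matrix_def)
lemma p_row: "(\<Sum>t\<in>UNIV. p s t) = 1" using stoch by (simp add: stochastic_matrix_def)
lemma m_nonneg: "0 \<le> m s" using inv by (simp add: invariant_measure_def distribution_def)
lemma m_sum: "(\<Sum>s\<in>UNIV. m s) = 1" using inv by (simp add: invariant_measure_def distribution_def)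
lemma m_inv: "(\<Sum>s\<in>UNIV. m s * p s t) = m t" using inv by (simp add: invariant_measure_def)

lemma hist_nonneg:
  assumes "sender_strategy \<sigma>" "receiver_strategy \<tau>"
  shows "0 \<le> hist_prob p m \<sigma> \<tau> h"
  using assms unfolding hist_prob_def sender_strategy_def receiver_strategy_def distribution_def
  by (intro prod_nonneg) (auto intro!: mult_nonneg_nonneg p_nonneg m_nonneg)

lemma marg:
  assumes \<sigma>: "sender_strategy \<sigma>" and \<tau>: "receiver_strategy \<tau>"
  shows "Exf p m \<sigma> \<tau> n (\<lambda>a b. g a) = (\<Sum>s\<in>UNIV. m s * g s)"
proof (induction n arbitrary: g)
  case 0
  have s1: "\<And>h s. (\<Sum>a\<in>UNIV. \<sigma> h s a) = 1" using \<sigma> by (simp add: sender_strategy_def distribution_def)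
  have t1: "\<And>h a. (\<Sum>b\<in>UNIV. \<tau> h a b) = 1" using \<tau> by (simp add: receiver_strategy_def distribution_def)
  have "Exf p m \<sigma> \<tau> 0 (\<lambda>a b. g a) = (\<Sum>t\<in>UNIV. hist_prob p m \<sigma> \<tau> [t] * g (fst t))"
    unfolding Exf_def by (simp add: sum_len_Suc len_0)
  also have "\<dots> = (\<Sum>s\<in>UNIV. \<Sum>a\<in>UNIV. \<Sum>b\<in>UNIV. m s * g s * (\<sigma> [] s a * \<tau> [] a b))"
    unfolding pair_sum using hist_prob_snoc[of p m \<sigma> \<tau> "[]"]
    by (simp add: public_hist_def mult_ac)
  also have "\<dots> = (\<Sum>s\<in>UNIV. m s * g s)"
    by (simp add: sum_distrib_left[symmetric] mult.assoc s1 t1)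
  finally show ?case .
next
  case (Suc n)
  have s1: "\<And>h s. (\<Sum>a\<in>UNIV. \<sigma> h s a) = 1" using \<sigma> by (simp add: sender_strategy_def distribution_def)
  have t1: "\<And>h a. (\<Sum>b\<in>UNIV. \<tau> h a b) = 1" using \<tau> by (simp add: receiver_strategy_def distribution_def)
  have "Exf p m \<sigma> \<tau> (Suc n) (\<lambda>a b. g a) = (\<Sum>h\<in>{h. length h = Suc n}. \<Sum>t\<in>UNIV. hist_prob p m \<sigma> \<tau> (h@[t]) * g (fst t))"
    unfolding Exf_def by (subst sum_len_Suc) simp
  also have "\<dots> = (\<Sum>h\<in>{h. length h = Suc n}. \<Sum>s\<in>UNIV. \<Sum>a\<in>UNIV. \<Sum>b\<in>UNIV.
        hist_prob p m \<sigma> \<tau> h * p (fst (last h)) s * g s * (\<sigma> h s a * \<tau> (public_hist h) a b))"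
    unfolding pair_sum by (intro sum.cong refl) (auto simp: hist_prob_snoc mult_ac)
  also have "\<dots> = (\<Sum>h\<in>{h. length h = Suc n}. hist_prob p m \<sigma> \<tau> h * (\<Sum>s\<in>UNIV. p (fst (last h)) s * g s))"
    by (simp add: sum_distrib_left[symmetric] mult.assoc s1 t1)
  also have "\<dots> = Exf p m \<sigma> \<tau> n (\<lambda>a b. \<Sum>s\<in>UNIV. p a s * g s)"
    unfolding Exf_def by simp
  also have "\<dots> = (\<Sum>t\<in>UNIV. m t * (\<Sum>s\<in>UNIV. p t s * g s))" by (rule Suc.IH)
  also have "\<dots> = (\<Sum>s\<in>UNIV. (\<Sum>t\<in>UNIV. m t * p t s) * g s)"
    unfolding sum_distrib_left sum_distrib_right by (subst sum.swap) (simp add: mult_ac)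
  also have "\<dots> = (\<Sum>s\<in>UNIV. m s * g s)" by (simp add: m_inv)
  finally show ?case .
qed

end

abbreviation ind :: "'s \<Rightarrow> 'b \<Rightarrow> 's \<Rightarrow> 'b \<Rightarrow> real" where
  "ind a b \<equiv> (\<lambda>a' b'. if a' = a \<and> b' = b then 1 else 0)"

context G begin

lemma Ex_lin:
  fixes f :: "'s \<Rightarrow> 'b::finite \<Rightarrow> real"
  shows   "Exf p m \<sigma> \<tau> n f = (\<Sum>a\<in>UNIV. \<Sum>b\<in>UNIV. f a b * Exf p m \<sigma> \<tau> n (ind a b))"
proof -
  let ?H = "{h::('s\<times>'s\<times>'b) list. length h = Suc n}"
  let ?hp = "hist_prob p m \<sigma> \<tau>"
  have "(\<Sum>a\<in>UNIV. \<Sum>b\<in>UNIV. f a b * Exf p m \<sigma> \<tau> n (ind a b))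
      = (\<Sum>a\<in>UNIV. \<Sum>b\<in>UNIV. \<Sum>h\<in>?H. ?hp h * (f a b * ind a b (fst (last h)) (snd (snd (last h)))))"
    by (simp add: Exf_def sum_distrib_left mult_ac)
  also have "\<dots> = (\<Sum>a\<in>UNIV. \<Sum>h\<in>?H. \<Sum>b\<in>UNIV. ?hp h * (f a b * ind a b (fst (last h)) (snd (snd (last h)))))"
    by (rule sum.cong[OF refl], rule sum.swap)
  also have "\<dots> = (\<Sum>h\<in>?H. \<Sum>a\<in>UNIV. \<Sum>b\<in>UNIV. ?hp h * (f a b * ind a b (fst (last h)) (snd (snd (last h)))))"
    by (rule sum.swap)
  also have "\<dots> = (\<Sum>h\<in>?H. ?hp h * f (fst (last h)) (snd (snd (last h))))"
  proof (rule sum.cong[OF refl])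
    fix h
    have "(\<Sum>a\<in>UNIV. \<Sum>b\<in>UNIV. ?hp h * (f a b * ind a b (fst (last h)) (snd (snd (last h)))))
      = (\<Sum>a\<in>UNIV. if a = fst (last h) then ?hp h * f a (snd (snd (last h))) else 0)"
      by (rule sum.cong[OF refl]) (auto simp: if_distrib sum.delta' cong: if_cong)
    also have "\<dots> = ?hp h * f (fst (last h)) (snd (snd (last h)))" by (auto simp: sum.delta' if_distrib cong: if_cong)
    finally show "(\<Sum>a\<in>UNIV. \<Sum>b\<in>UNIV. ?hp h * (f a b * ind a b (fst (last h)) (snd (snd (last h)))))
      = ?hp h * f (fst (last h)) (snd (snd (last h)))" .
  qed
  finally show ?thesis by (simp add: Exf_def)
qed



lemma zero_mass:
  assumes \<sigma>: "sender_strategy \<sigma>" and \<tau>: "receiver_strategy \<tau>"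
    and h: "length h = Suc n" and z: "m (fst (last h)) = 0"
  shows "hist_prob p m \<sigma> \<tau> h = 0"
proof -
  let ?g = "\<lambda>a::'s. if m a = 0 then 1 else (0::real)"
  have "Exf p m \<sigma> \<tau> n (\<lambda>a b. ?g a) = (\<Sum>s\<in>UNIV. m s * ?g s)" by (rule marg[OF \<sigma> \<tau>])
  also have "\<dots> = 0" by (rule sum.neutral) simp
  finally have S: "(\<Sum>h\<in>{h. length h = Suc n}. hist_prob p m \<sigma> \<tau> h * ?g (fst (last h))) = 0"
    by (simp add: Exf_def)
  have "\<forall>h\<in>{h. length h = Suc n}. hist_prob p m \<sigma> \<tau> h * ?g (fst (last h)) = 0"
    using S by (subst (asm) sum_nonneg_eq_0_iff) (auto simp: finite_len hist_nonneg[OF \<sigma> \<tau>])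
  then show ?thesis using h z by auto
qed

lemma Ex_cong_m:
  fixes f g :: "'s \<Rightarrow> 'b::finite \<Rightarrow> real"
  assumes \<sigma>: "sender_strategy \<sigma>" and \<tau>: "receiver_strategy \<tau>"
    and fg: "\<And>a b. m a \<noteq> 0 \<Longrightarrow> f a b = g a b"
  shows "Exf p m \<sigma> \<tau> n f = Exf p m \<sigma> \<tau> n g"
  unfolding Exf_def
proof (rule sum.cong[OF refl])
  fix h :: "('s \<times> 's \<times> 'b) list" assume "h \<in> {h. length h = Suc n}"
  then show "hist_prob p m \<sigma> \<tau> h * f (fst (last h)) (snd (snd (last h))) =
         hist_prob p m \<sigma> \<tau> h * g (fst (last h)) (snd (snd (last h)))"
    using zero_mass[OF \<sigma> \<tau>, of h n] fg by (cases "m (fst (last h)) = 0") auto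
qed

lemma Ex_nonneg:
  assumes \<sigma>: "sender_strategy \<sigma>" and \<tau>: "receiver_strategy \<tau>"
    and f: "\<And>a b. 0 \<le> f a b"
  shows "0 \<le> Exf p m \<sigma> \<tau> n f"
  unfolding Exf_def by (intro sum_nonneg mult_nonneg_nonneg hist_nonneg[OF \<sigma> \<tau>] f)

lemma Ex_bound:
  assumes \<sigma>: "sender_strategy \<sigma>" and \<tau>: "receiver_strategy \<tau>"
    and f: "\<And>a b. \<bar>f a b\<bar> \<le> B"
  shows "\<bar>Exf p m \<sigma> \<tau> n f\<bar> \<le> B"
proof -
  have "\<bar>Exf p m \<sigma> \<tau> n f\<bar> \<le> (\<Sum>h\<in>{h. length h = Suc n}. \<bar>hist_prob p m \<sigma> \<tau> h * f (fst (last h)) (snd (snd (last h)))\<bar>)"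
    unfolding Exf_def by (rule sum_abs)
  also have "\<dots> \<le> (\<Sum>h\<in>{h. length h = Suc n}. hist_prob p m \<sigma> \<tau> h * B)"
    by (rule sum_mono) (simp add: abs_mult hist_nonneg[OF \<sigma> \<tau>] f mult_left_mono)
  also have "\<dots> = Exf p m \<sigma> \<tau> n (\<lambda>a b. B)" by (simp add: Exf_def)
  also have "\<dots> = (\<Sum>s\<in>UNIV. m s * B)" by (rule marg[OF \<sigma> \<tau>])
  also have "\<dots> = B" by (simp add: sum_distrib_right[symmetric] m_sum)
  finally show ?thesis .
qed



lemma Ex_summable:
  fixes f :: "'s \<Rightarrow> 'b::finite \<Rightarrow> real"
  assumes \<sigma>: "sender_strategy \<sigma>" and \<tau>: "receiver_strategy \<tau>"
    and d: "0 \<le> \<delta>" "\<delta> < 1"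
  shows "summable (\<lambda>n. (1 - \<delta>) * \<delta> ^ n * Exf p m \<sigma> \<tau> n f)"
proof -
  define B where "B = (\<Sum>a\<in>UNIV. \<Sum>b\<in>UNIV. \<bar>f a b\<bar>)"
  have fb: "\<And>a b. \<bar>f a b\<bar> \<le> B"
  proof -
    fix a b
    have "\<bar>f a b\<bar> \<le> (\<Sum>b\<in>UNIV. \<bar>f a b\<bar>)" by (rule member_le_sum) auto
    also have "\<dots> \<le> B" unfolding B_def by (rule member_le_sum[where f="\<lambda>a. \<Sum>b\<in>UNIV. \<bar>f a b\<bar>"]) (auto intro: sum_nonneg)
    finally show "\<bar>f a b\<bar> \<le> B" .
  qed
  have S: "summable (\<lambda>n. (1 - \<delta>) * B * \<delta> ^ n)"
    using d by (intro summable_mult summable_geometric) simp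
  have N: "\<forall>n. norm ((1 - \<delta>) * \<delta> ^ n * Exf p m \<sigma> \<tau> n f) \<le> (1 - \<delta>) * B * \<delta> ^ n"
  proof
    fix n
    have "norm ((1 - \<delta>) * \<delta> ^ n * Exf p m \<sigma> \<tau> n f) = (1 - \<delta>) * \<delta> ^ n * \<bar>Exf p m \<sigma> \<tau> n f\<bar>"
      using d by (simp add: abs_mult)
    also have "\<dots> \<le> (1 - \<delta>) * \<delta> ^ n * B"
      using d Ex_bound[OF \<sigma> \<tau> fb, of n] by (intro mult_left_mono) simp_all
    finally show "norm ((1 - \<delta>) * \<delta> ^ n * Exf p m \<sigma> \<tau> n f) \<le> (1 - \<delta>) * B * \<delta> ^ n" by (simp add: mult_ac)
  qed
  show ?thesis
    by (rule summable_comparison_test[OF _ S]) (use N in blast)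
qed


lemma pform:
  assumes A: "assumption_A p"
  shows "\<exists>c. \<forall>t t'. p t t' = c * m t' + (if t = t' then 1 - c else 0)"
proof -
  obtain \<alpha> where \<alpha>: "\<forall>s s'. s' \<noteq> s \<longrightarrow> p s s' = \<alpha> s'" using A by (auto simp: assumption_A_def)
  define c where "c = (\<Sum>s\<in>UNIV. \<alpha> s)"
  have rem: "\<And>t. (\<Sum>s\<in>UNIV - {t}. \<alpha> s) = c - \<alpha> t"
    unfolding c_def by (simp add: sum_diff1)
  have diag: "\<And>t. p t t = 1 - c + \<alpha> t"
  proof -
    fix t
    have "1 = (\<Sum>s\<in>UNIV. p t s)" by (simp add: p_row)
    also have "\<dots> = p t t + (\<Sum>s\<in>UNIV - {t}. p t s)"
      by (subst sum.remove[of UNIV t]) auto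
    also have "(\<Sum>s\<in>UNIV - {t}. p t s) = (\<Sum>s\<in>UNIV - {t}. \<alpha> s)"
      using \<alpha> by (intro sum.cong) auto
    finally show "p t t = 1 - c + \<alpha> t" using rem[of t] by simp
  qed
  have am: "\<And>s'. \<alpha> s' = c * m s'"
  proof -
    fix s'
    have "m s' = (\<Sum>s\<in>UNIV. m s * p s s')" by (simp add: m_inv)
    also have "\<dots> = m s' * p s' s' + (\<Sum>s\<in>UNIV - {s'}. m s * p s s')"
      by (subst sum.remove[of UNIV s']) auto
    also have "(\<Sum>s\<in>UNIV - {s'}. m s * p s s') = (\<Sum>s\<in>UNIV - {s'}. m s) * \<alpha> s'"
      using \<alpha> by (simp add: sum_distrib_right)
    also have "(\<Sum>s\<in>UNIV - {s'}. m s) = 1 - m s'"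
      using m_sum by (simp add: sum_diff1)
    finally show "\<alpha> s' = c * m s'" using diag[of s'] by (simp add: algebra_simps)
  qed
  show ?thesis
    by (rule exI[of _ c]) (auto simp: diag am \<alpha>)
qed

end




definition kap :: "('s \<Rightarrow> real) \<Rightarrow> ('s \<Rightarrow> 's \<Rightarrow> real) \<Rightarrow> 's \<Rightarrow> 's \<Rightarrow> real" where
  "kap m \<mu> x t = \<mu> t x / m x"

definition Zf :: "('s::finite \<Rightarrow> 's \<Rightarrow> real) \<Rightarrow> ('s \<Rightarrow> real) \<Rightarrow> ('s \<Rightarrow> 's \<Rightarrow> real) \<Rightarrow> 's \<Rightarrow> 's \<Rightarrow> real" where
  "Zf p m \<mu> x t = (\<Sum>x'\<in>UNIV. p x x' * kap m \<mu> x' t)"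

definition rk :: "('s::finite \<Rightarrow> 's \<Rightarrow> real) \<Rightarrow> ('s \<Rightarrow> real) \<Rightarrow> ('s \<Rightarrow> 's \<Rightarrow> real) \<Rightarrow> 's \<Rightarrow> 's \<Rightarrow> 's \<Rightarrow> real" where
  "rk p m \<mu> x t x' = (if Zf p m \<mu> x t = 0 then p x x' else p x x' * kap m \<mu> x' t / Zf p m \<mu> x t)"

definition Gf :: "('s::finite \<Rightarrow> 's \<Rightarrow> real) \<Rightarrow> ('s \<Rightarrow> real) \<Rightarrow> ('s \<Rightarrow> 's \<Rightarrow> real) \<Rightarrow> 's list \<Rightarrow> 's list \<Rightarrow> real" where
  "Gf p m \<mu> ss xs = (\<Prod>k<length ss. if k = 0 then \<mu> (ss!0) (xs!0)
      else p (ss!(k-1)) (ss!k) * rk p m \<mu> (xs!(k-1)) (ss!k) (xs!k))"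

lemma Gf_Nil[simp]: "Gf p m \<mu> [] xs = 1" by (simp add: Gf_def)

lemma Gf_snoc:
  assumes len: "length ss = length xs"
  shows "Gf p m \<mu> (ss@[s]) (xs@[x]) = Gf p m \<mu> ss xs * (if ss = [] then \<mu> s x else p (last ss) s * rk p m \<mu> (last xs) s x)"
proof -
  have A: "(\<Prod>k<length ss. if k = 0 then \<mu> ((ss@[s])!0) ((xs@[x])!0)
      else p ((ss@[s])!(k-1)) ((ss@[s])!k) * rk p m \<mu> ((xs@[x])!(k-1)) ((ss@[s])!k) ((xs@[x])!k)) = Gf p m \<mu> ss xs"
    unfolding Gf_def by (rule prod.cong) (use len in \<open>auto simp: nth_append\<close>)
  have B: "ss \<noteq> [] \<Longrightarrow> ss ! (length ss - Suc 0) = last ss" by (simp add: last_conv_nth)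
  have B2: "ss ! (length xs - Suc 0) = last ss" if "ss \<noteq> []" using B that len by simp
  have C: "xs ! (length ss - Suc 0) = last xs" if "ss \<noteq> []"
  proof -
    have "xs \<noteq> []" using that len by auto
    then show ?thesis using len by (simp add: last_conv_nth)
  qed
  show ?thesis
  proof (cases "ss = []")
    case True then show ?thesis using len unfolding Gf_def by simp
  next
    case False
    then have xn: "xs \<noteq> []" using len by auto
    have B3: "ss ! (length xs - Suc 0) = last ss" using B2 False by simp
    have C3: "xs ! (length xs - Suc 0) = last xs" using xn by (simp add: last_conv_nth)
    show ?thesis
      unfolding Gf_def[of p m \<mu> "ss @ [s]"]
      apply (simp only: length_append_singleton prod.lessThan_Suc A)
      using len False xn apply (simp add: nth_append B3 C3)
      done
  qed
qed

locale GM = G p m for p :: "'s::finite \<Rightarrow> 's \<Rightarrow> real" and m +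
  fixes \<mu> :: "'s \<Rightarrow> 's \<Rightarrow> real" and c :: real
  assumes muM: "\<mu> \<in> Mset m"
    and pf: "\<And>t t'. p t t' = c * m t' + (if t = t' then 1 - c else 0)"
begin

lemma mu_nonneg: "0 \<le> \<mu> s a" using muM by (simp add: Mset_def)
lemma mu_row: "(\<Sum>a\<in>UNIV. \<mu> s a) = m s" using muM by (simp add: Mset_def)
lemma mu_col: "(\<Sum>s\<in>UNIV. \<mu> s a) = m a" using muM by (simp add: Mset_def)
lemma mu_le: "\<mu> s a \<le> m a"
  unfolding mu_col[of a, symmetric] by (rule member_le_sum) (auto simp: mu_nonneg)
lemma mu_zero: "m a = 0 \<Longrightarrow> \<mu> s a = 0" using mu_le[of s a] mu_nonneg[of s a] by simp

lemma kap_nonneg: "0 \<le> kap m \<mu> x t" by (simp add: kap_def mu_nonneg m_nonneg)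
lemma Zf_nonneg: "0 \<le> Zf p m \<mu> x t" unfolding Zf_def
  by (intro sum_nonneg mult_nonneg_nonneg p_nonneg kap_nonneg)
lemma rk_nonneg: "0 \<le> rk p m \<mu> x t x'"
  unfolding rk_def using Zf_nonneg[of x t] by (simp add: p_nonneg kap_nonneg)
lemma rk_sum: "(\<Sum>x'\<in>UNIV. rk p m \<mu> x t x') = 1"
proof (cases "Zf p m \<mu> x t = 0")
  case True then show ?thesis by (simp add: rk_def p_row)
next
  case False then show ?thesis
    by (simp add: rk_def sum_divide_distrib[symmetric] Zf_def[symmetric])
qed

lemma Zrk: "Zf p m \<mu> x t * rk p m \<mu> x t x' = p x x' * kap m \<mu> x' t"
proof (cases "Zf p m \<mu> x t = 0")
  case True
  have "\<forall>x'\<in>UNIV. p x x' * kap m \<mu> x' t = 0"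
    using True unfolding Zf_def
    by (subst (asm) sum_nonneg_eq_0_iff) (auto intro: mult_nonneg_nonneg p_nonneg kap_nonneg)
  then show ?thesis using True by simp
next
  case False then show ?thesis by (simp add: rk_def)
qed

lemma m_kap: "m x * kap m \<mu> x t = \<mu> t x"
  by (cases "m x = 0") (auto simp: kap_def mu_zero)

lemma kap_col: "m x \<noteq> 0 \<Longrightarrow> (\<Sum>t\<in>UNIV. kap m \<mu> x t) = 1"
  by (simp add: kap_def sum_divide_distrib[symmetric] mu_col)

lemma Zid:
  assumes mx: "m x \<noteq> 0"
  shows "(\<Sum>t\<in>UNIV. kap m \<mu> x t * p t s) = Zf p m \<mu> x s"
proof -
  have "(\<Sum>t\<in>UNIV. kap m \<mu> x t * p t s) = (\<Sum>t\<in>UNIV. c * m s * kap m \<mu> x t + (if t = s then (1 - c) * kap m \<mu> x t else 0))"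
    by (rule sum.cong) (auto simp: pf algebra_simps)
  also have "\<dots> = c * m s + (1 - c) * kap m \<mu> x s"
    by (simp add: sum.distrib sum_distrib_left[symmetric] kap_col[OF mx])
  also have "\<dots> = (\<Sum>x'\<in>UNIV. c * (m x' * kap m \<mu> x' s) + (if x = x' then (1 - c) * kap m \<mu> x' s else 0))"
    by (simp add: sum.distrib sum_distrib_left[symmetric] m_kap mu_row)
  also have "\<dots> = Zf p m \<mu> x s"
    unfolding Zf_def by (rule sum.cong) (auto simp: pf algebra_simps)
  finally show ?thesis .
qed

lemma chain_nonneg: "0 \<le> chain p m xs"
  unfolding chain_def by (intro prod_nonneg) (auto simp: p_nonneg m_nonneg)

lemma chain_le: "xs \<noteq> [] \<Longrightarrow> chain p m xs \<le> m (last xs)"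
proof (induction xs rule: rev_induct)
  case Nil then show ?case by simp
next
  case (snoc x xs)
  show ?case
  proof (cases "xs = []")
    case True then show ?thesis using chain_snoc[of p m "[]" x] by simp
  next
    case False
    have "chain p m (xs @ [x]) = chain p m xs * p (last xs) x" using False by (simp add: chain_snoc)
    also have "\<dots> \<le> m (last xs) * p (last xs) x"
      using snoc.IH[OF False] by (intro mult_right_mono p_nonneg)
    also have "\<dots> \<le> (\<Sum>t\<in>UNIV. m t * p t x)"
      by (rule member_le_sum[where f="\<lambda>t. m t * p t x"]) (auto intro: mult_nonneg_nonneg m_nonneg p_nonneg)
    also have "\<dots> = m x" by (rule m_inv)
    finally show ?thesis by simp
  qed
qed

lemma L:
  assumes "length xs = Suc n"
  shows "(\<Sum>ss\<in>{ss. length ss = Suc n}. Gf p m \<mu> ss xs * \<phi> (last ss))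
       = chain p m xs * (\<Sum>t\<in>UNIV. kap m \<mu> (last xs) t * \<phi> t)"
  using assms
proof (induction n arbitrary: xs \<phi>)
  case 0
  then obtain x where x: "xs = [x]" by (metis length_0_conv length_Suc_conv)
  have g: "\<And>t. Gf p m \<mu> [t] [x] = \<mu> t x" using Gf_snoc[of "[]" "[]"] by simp
  have "(\<Sum>ss\<in>{ss. length ss = Suc 0}. Gf p m \<mu> ss xs * \<phi> (last ss)) = (\<Sum>t\<in>UNIV. \<mu> t x * \<phi> t)"
    by (simp add: sum_len_Suc len_0 x g)
  also have "\<dots> = m x * (\<Sum>t\<in>UNIV. kap m \<mu> x t * \<phi> t)"
    by (simp add: sum_distrib_left mult.assoc[symmetric] m_kap)
  finally show ?case using chain_snoc[of p m "[]" x] by (simp add: x)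
next
  case (Suc n)
  obtain xs0 x' where xs: "xs = xs0 @ [x']" and l0: "length xs0 = Suc n"
    using Suc.prems by (metis length_Suc_conv_rev)
  let ?x = "last xs0"
  have ne: "xs0 \<noteq> []" using l0 by auto
  have "(\<Sum>ss\<in>{ss. length ss = Suc (Suc n)}. Gf p m \<mu> ss xs * \<phi> (last ss))
      = (\<Sum>ss0\<in>{ss. length ss = Suc n}. \<Sum>s\<in>UNIV. Gf p m \<mu> (ss0@[s]) (xs0@[x']) * \<phi> s)"
    by (subst sum_len_Suc) (simp add: xs)
  also have "\<dots> = (\<Sum>ss0\<in>{ss. length ss = Suc n}. Gf p m \<mu> ss0 xs0 *
        (\<lambda>t. \<Sum>s\<in>UNIV. p t s * rk p m \<mu> ?x s x' * \<phi> s) (last ss0))"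
  proof (rule sum.cong[OF refl])
    fix ss0 :: "'s list" assume "ss0 \<in> {ss. length ss = Suc n}"
    then have l: "length ss0 = length xs0" and n0: "ss0 \<noteq> []" using l0 by auto
    show "(\<Sum>s\<in>UNIV. Gf p m \<mu> (ss0@[s]) (xs0@[x']) * \<phi> s) = Gf p m \<mu> ss0 xs0 *
        (\<lambda>t. \<Sum>s\<in>UNIV. p t s * rk p m \<mu> ?x s x' * \<phi> s) (last ss0)"
      by (simp add: Gf_snoc[OF l] n0 sum_distrib_left mult_ac)
  qed
  also have "\<dots> = chain p m xs0 * (\<Sum>t\<in>UNIV. kap m \<mu> ?x t * (\<Sum>s\<in>UNIV. p t s * rk p m \<mu> ?x s x' * \<phi> s))"
    by (rule Suc.IH[OF l0])
  also have "\<dots> = chain p m xs * (\<Sum>t\<in>UNIV. kap m \<mu> x' t * \<phi> t)"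
  proof (cases "chain p m xs0 = 0")
    case True then show ?thesis by (simp add: xs chain_snoc)
  next
    case False
    have "m ?x \<noteq> 0" using False chain_le[OF ne] chain_nonneg[of xs0] m_nonneg[of ?x] by linarith
    have "(\<Sum>t\<in>UNIV. kap m \<mu> ?x t * (\<Sum>s\<in>UNIV. p t s * rk p m \<mu> ?x s x' * \<phi> s))
        = (\<Sum>s\<in>UNIV. (\<Sum>t\<in>UNIV. kap m \<mu> ?x t * p t s) * rk p m \<mu> ?x s x' * \<phi> s)"
      unfolding sum_distrib_left sum_distrib_right by (subst sum.swap) (simp add: mult_ac)
    also have "\<dots> = (\<Sum>s\<in>UNIV. p ?x x' * (kap m \<mu> x' s * \<phi> s))"
    proof (rule sum.cong[OF refl])
      fix s
      have "(\<Sum>t\<in>UNIV. kap m \<mu> ?x t * p t s) * rk p m \<mu> ?x s x' * \<phi> s = Zf p m \<mu> ?x s * rk p m \<mu> ?x s x' * \<phi> s"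
        using Zid[OF \<open>m ?x \<noteq> 0\<close>, of s] by simp
      also have "\<dots> = p ?x x' * kap m \<mu> x' s * \<phi> s" using Zrk[of ?x s x'] by simp
      finally show "(\<Sum>t\<in>UNIV. kap m \<mu> ?x t * p t s) * rk p m \<mu> ?x s x' * \<phi> s = p ?x x' * (kap m \<mu> x' s * \<phi> s)"
        by (simp add: mult_ac)
    qed
    also have "\<dots> = p ?x x' * (\<Sum>t\<in>UNIV. kap m \<mu> x' t * \<phi> t)"
      by (simp add: sum_distrib_left)
    finally show ?thesis using ne by (simp add: xs chain_snoc)
  qed
  finally show ?case using xs by simp
qed

end



lemma sum_len_zip:
  fixes f :: "('a::finite \<times> 'b::finite) list \<Rightarrow> 'c::comm_monoid_add"
  shows "(\<Sum>h\<in>{h. length h = n}. f h) =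
    (\<Sum>xs\<in>{xs::'a list. length xs = n}. \<Sum>ys\<in>{ys::'b list. length ys = n}. f (zip xs ys))"
proof -
  let ?A = "{xs::'a list. length xs = n}" and ?B = "{ys::'b list. length ys = n}"
  have bij: "bij_betw (\<lambda>(xs,ys). zip xs ys) (?A \<times> ?B) {h. length h = n}"
  proof (rule bij_betw_imageI)
    show "inj_on (\<lambda>(xs,ys). zip xs ys) (?A \<times> ?B)"
    proof (rule inj_onI)
      fix u v assume u: "u \<in> ?A \<times> ?B" and v: "v \<in> ?A \<times> ?B"
        and e: "(\<lambda>(xs,ys). zip xs ys) u = (\<lambda>(xs,ys). zip xs ys) v"
      obtain xs ys where uu: "u = (xs,ys)" by (cases u)
      obtain xs' ys' where vv: "v = (xs',ys')" by (cases v)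
      have l: "length xs = n" "length ys = n" "length xs' = n" "length ys' = n" using u v uu vv by auto
      have e2: "zip xs ys = zip xs' ys'" using e uu vv by simp
      have "map fst (zip xs ys) = map fst (zip xs' ys')" "map snd (zip xs ys) = map snd (zip xs' ys')"
        using e2 by simp_all
      then show "u = v" using l uu vv by simp
    qed
    show "(\<lambda>(xs,ys). zip xs ys) ` (?A \<times> ?B) = {h. length h = n}"
    proof
      show "(\<lambda>(xs,ys). zip xs ys) ` (?A \<times> ?B) \<subseteq> {h. length h = n}" by auto
      show "{h. length h = n} \<subseteq> (\<lambda>(xs,ys). zip xs ys) ` (?A \<times> ?B)"
      proof
        fix h :: "('a \<times> 'b) list" assume "h \<in> {h. length h = n}"
        then have "(map fst h, map snd h) \<in> ?A \<times> ?B" by simp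
        moreover have "h = (\<lambda>(xs,ys). zip xs ys) (map fst h, map snd h)" by (simp add: zip_map_fst_snd)
        ultimately show "h \<in> (\<lambda>(xs,ys). zip xs ys) ` (?A \<times> ?B)" by blast
      qed
    qed
  qed
  have "(\<Sum>h\<in>{h. length h = n}. f h) = (\<Sum>x\<in>?A \<times> ?B. f ((\<lambda>(xs,ys). zip xs ys) x))"
    by (rule sum.reindex_bij_betw[OF bij, symmetric])
  also have "\<dots> = (\<Sum>(xs,ys)\<in>?A \<times> ?B. f (zip xs ys))"
    by (rule sum.cong) auto
  also have "\<dots> = (\<Sum>xs\<in>?A. \<Sum>ys\<in>?B. f (zip xs ys))"
    by (rule sum.cartesian_product[symmetric])
  finally show ?thesis .
qed

definition Wf where
  "Wf p m \<mu> \<sigma> \<tau> h s xs' = Gf p m \<mu> (map fst h @ [s]) xs' * hp1 \<sigma> \<tau> (zip (butlast xs') (map snd h))"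

definition dev :: "('s::finite \<Rightarrow> 's \<Rightarrow> real) \<Rightarrow> ('s \<Rightarrow> real) \<Rightarrow> ('s \<Rightarrow> 's \<Rightarrow> real)
   \<Rightarrow> ('s,'b) sender_strategy \<Rightarrow> ('s,'b) receiver_strategy \<Rightarrow> ('s,'b) sender_strategy" where
  "dev p m \<mu> \<sigma> \<tau> h s a =
    (let D = (\<Sum>xs'\<in>{xs. length xs = Suc (length h)}. Wf p m \<mu> \<sigma> \<tau> h s xs') in
     if D = 0 then (if a = s then 1 else 0)
     else (\<Sum>xs'\<in>{xs. length xs = Suc (length h)}. Wf p m \<mu> \<sigma> \<tau> h s xs' * \<sigma> (zip (butlast xs') (map snd h)) (last xs') a) / D)"

definition Rf where
  "Rf p m \<mu> \<sigma> \<tau> h = (\<Sum>xs\<in>{xs. length xs = length h}. Gf p m \<mu> (map fst h) xs * hp1 \<sigma> \<tau> (zip xs (map snd h)))"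

context GM begin

context
  fixes \<sigma> :: "('s,'b::finite) sender_strategy" and \<tau> :: "('s,'b) receiver_strategy"
  assumes \<sigma>: "sender_strategy \<sigma>" and \<tau>: "receiver_strategy \<tau>"
begin

lemma s_nonneg: "0 \<le> \<sigma> h s a" using \<sigma> by (simp add: sender_strategy_def distribution_def)
lemma s_le1: "\<sigma> h s a \<le> 1" using \<sigma> by (simp add: sender_strategy_def distr_le1)
lemma s_sum: "(\<Sum>a\<in>UNIV. \<sigma> h s a) = 1" using \<sigma> by (simp add: sender_strategy_def distribution_def)
lemma t_nonneg: "0 \<le> \<tau> h a b" using \<tau> by (simp add: receiver_strategy_def distribution_def)

lemma hp1_nonneg: "0 \<le> hp1 \<sigma> \<tau> h"
  unfolding hp1_def hist_prob_def
  by (intro prod_nonneg) (auto intro!: mult_nonneg_nonneg s_nonneg t_nonneg)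

lemma Gf_nonneg: "0 \<le> Gf p m \<mu> ss xs"
  unfolding Gf_def
  by (intro prod_nonneg) (auto intro!: mult_nonneg_nonneg mu_nonneg p_nonneg rk_nonneg)

lemma Wf_nonneg: "0 \<le> Wf p m \<mu> \<sigma> \<tau> h s xs'"
  unfolding Wf_def by (intro mult_nonneg_nonneg Gf_nonneg hp1_nonneg)

lemma sumW:
  "(\<Sum>xs'\<in>{xs. length xs = Suc (length h)}. Wf p m \<mu> \<sigma> \<tau> h s xs')
    = (if h = [] then m s else p (fst (last h)) s) * Rf p m \<mu> \<sigma> \<tau> h"
proof -
  have "(\<Sum>xs'\<in>{xs. length xs = Suc (length h)}. Wf p m \<mu> \<sigma> \<tau> h s xs')
     = (\<Sum>xs\<in>{xs. length xs = length h}. \<Sum>x'\<in>UNIV. Wf p m \<mu> \<sigma> \<tau> h s (xs @ [x']))"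
    by (rule sum_len_Suc)
  also have "\<dots> = (\<Sum>xs\<in>{xs. length xs = length h}. (if h = [] then m s else p (fst (last h)) s) *
        (Gf p m \<mu> (map fst h) xs * hp1 \<sigma> \<tau> (zip xs (map snd h))))"
  proof (rule sum.cong[OF refl])
    fix xs :: "'s list" assume "xs \<in> {xs. length xs = length h}"
    then have l: "length (map fst h) = length xs" by simp
    have lm: "h \<noteq> [] \<Longrightarrow> last (map fst h) = fst (last h)" by (simp add: last_map)
    show "(\<Sum>x'\<in>UNIV. Wf p m \<mu> \<sigma> \<tau> h s (xs @ [x'])) = (if h = [] then m s else p (fst (last h)) s) *
        (Gf p m \<mu> (map fst h) xs * hp1 \<sigma> \<tau> (zip xs (map snd h)))"
    proof (cases "h = []")
      case True
      then have xs0: "xs = []" using l by simp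
      show ?thesis using True Gf_snoc[where ss="[]" and xs="[]" and s=s and p=p and m=m and \<mu>=\<mu>]
        by (simp add: xs0 Wf_def sum_distrib_right[symmetric] sum_distrib_left[symmetric] mu_row mult_ac)
    next
      case False
      then show ?thesis
        by (simp add: Wf_def Gf_snoc[OF l] lm sum_distrib_left[symmetric] rk_sum mult_ac)
    qed
  qed
  also have "\<dots> = (if h = [] then m s else p (fst (last h)) s) * Rf p m \<mu> \<sigma> \<tau> h"
    by (simp add: Rf_def sum_distrib_left)
  finally show ?thesis .
qed

lemma sumN:
  "Rf p m \<mu> \<sigma> \<tau> (h @ [(s,a,b)]) =
    (\<Sum>xs'\<in>{xs. length xs = Suc (length h)}. Wf p m \<mu> \<sigma> \<tau> h s xs' * \<sigma> (zip (butlast xs') (map snd h)) (last xs') a)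
    * \<tau> (map snd h) a b"
proof -
  have "Rf p m \<mu> \<sigma> \<tau> (h @ [(s,a,b)]) = (\<Sum>xs\<in>{xs. length xs = length h}. \<Sum>x'\<in>UNIV.
      Gf p m \<mu> (map fst h @ [s]) (xs @ [x']) * hp1 \<sigma> \<tau> (zip (xs @ [x']) (map snd h @ [(a,b)])))"
    unfolding Rf_def by (simp add: sum_len_Suc)
  also have "\<dots> = (\<Sum>xs\<in>{xs. length xs = length h}. \<Sum>x'\<in>UNIV.
      Wf p m \<mu> \<sigma> \<tau> h s (xs @ [x']) * \<sigma> (zip (butlast (xs @ [x'])) (map snd h)) (last (xs @ [x'])) a * \<tau> (map snd h) a b)"
  proof (intro sum.cong refl)
    fix xs x' assume "xs \<in> {xs::'s list. length xs = length h}"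
    then have l: "length xs = length (map snd h)" by simp
    show "Gf p m \<mu> (map fst h @ [s]) (xs @ [x']) * hp1 \<sigma> \<tau> (zip (xs @ [x']) (map snd h @ [(a,b)])) =
      Wf p m \<mu> \<sigma> \<tau> h s (xs @ [x']) * \<sigma> (zip (butlast (xs @ [x'])) (map snd h)) (last (xs @ [x'])) a * \<tau> (map snd h) a b"
      using l by (simp add: Wf_def hp1_snoc mult_ac)
  qed
  also have "\<dots> = (\<Sum>xs'\<in>{xs. length xs = Suc (length h)}. Wf p m \<mu> \<sigma> \<tau> h s xs' * \<sigma> (zip (butlast xs') (map snd h)) (last xs') a)
    * \<tau> (map snd h) a b"
    by (simp add: sum_len_Suc sum_distrib_right)
  finally show ?thesis .
qed

lemma dev_strategy: "sender_strategy (dev p m \<mu> \<sigma> \<tau>)"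
  unfolding sender_strategy_def distribution_def
proof (intro allI conjI)
  fix h :: "('s \<times> 's \<times> 'b) list" and s a
  let ?A = "{xs. length xs = Suc (length h)}"
  let ?D = "\<Sum>xs'\<in>?A. Wf p m \<mu> \<sigma> \<tau> h s xs'"
  show "0 \<le> dev p m \<mu> \<sigma> \<tau> h s a"
    unfolding dev_def Let_def
    by (auto intro!: divide_nonneg_nonneg sum_nonneg mult_nonneg_nonneg Wf_nonneg s_nonneg)
  show "(\<Sum>a\<in>UNIV. dev p m \<mu> \<sigma> \<tau> h s a) = 1"
  proof (cases "?D = 0")
    case True then show ?thesis by (simp add: dev_def Let_def)
  next
    case False
    have "(\<Sum>a\<in>UNIV. dev p m \<mu> \<sigma> \<tau> h s a)
        = (\<Sum>a\<in>UNIV. \<Sum>xs'\<in>?A. Wf p m \<mu> \<sigma> \<tau> h s xs' * \<sigma> (zip (butlast xs') (map snd h)) (last xs') a) / ?D"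
      using False by (simp add: dev_def Let_def sum_divide_distrib)
    also have "(\<Sum>a\<in>UNIV. \<Sum>xs'\<in>?A. Wf p m \<mu> \<sigma> \<tau> h s xs' * \<sigma> (zip (butlast xs') (map snd h)) (last xs') a) = ?D"
      by (subst sum.swap) (simp add: sum_distrib_left[symmetric] s_sum)
    finally show ?thesis using False by simp
  qed
qed

lemma claimA: "hist_prob p m (dev p m \<mu> \<sigma> \<tau>) \<tau> h = Rf p m \<mu> \<sigma> \<tau> h"
proof (induction h rule: rev_induct)
  case Nil then show ?case by (simp add: Rf_def len_0 hp1_def)
next
  case (snoc x h)
  obtain s a b where x: "x = (s,a,b)" by (cases x) auto
  let ?A = "{xs. length xs = Suc (length h)}"
  let ?D = "\<Sum>xs'\<in>?A. Wf p m \<mu> \<sigma> \<tau> h s xs'"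
  let ?N = "\<Sum>xs'\<in>?A. Wf p m \<mu> \<sigma> \<tau> h s xs' * \<sigma> (zip (butlast xs') (map snd h)) (last xs') a"
  let ?tr = "if h = [] then m s else p (fst (last h)) s"
  have D: "?D = ?tr * Rf p m \<mu> \<sigma> \<tau> h" by (rule sumW)
  have "hist_prob p m (dev p m \<mu> \<sigma> \<tau>) \<tau> (h @ [x]) = (?tr * Rf p m \<mu> \<sigma> \<tau> h) * dev p m \<mu> \<sigma> \<tau> h s a * \<tau> (map snd h) a b"
    unfolding x hist_prob_snoc snoc.IH public_hist_map by (simp add: mult_ac)
  also have "\<dots> = ?N * \<tau> (map snd h) a b"
  proof (cases "?D = 0")
    case True
    have "?N \<le> ?D"
      by (rule sum_mono) (simp add: Wf_nonneg s_le1 mult_left_le)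
    moreover have "0 \<le> ?N" by (intro sum_nonneg mult_nonneg_nonneg Wf_nonneg s_nonneg)
    ultimately have "?N = 0" using True by simp
    then show ?thesis using True D by simp
  next
    case False
    then show ?thesis using D by (simp add: dev_def Let_def)
  qed
  also have "\<dots> = Rf p m \<mu> \<sigma> \<tau> (h @ [x])" unfolding x by (rule sumN[symmetric])
  finally show ?case .
qed

end
end



context GM begin
context
  fixes \<sigma> :: "('s,'b::finite) sender_strategy" and \<tau> :: "('s,'b) receiver_strategy"
  assumes \<sigma>: "sender_strategy \<sigma>" and \<tau>: "receiver_strategy \<tau>"
begin

lemma dev_stage:
  "stage_payoff p m v (dev p m \<mu> \<sigma> \<tau>) \<tau> n = Exf p m \<sigma> \<tau> n (\<lambda>a b. \<Sum>t\<in>UNIV. kap m \<mu> a t * v t b)"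
proof -
  let ?L = "{xs::'s list. length xs = Suc n}"
  let ?AB = "{ab::('s \<times> 'b) list. length ab = Suc n}"
  let ?F = "\<lambda>a b. \<Sum>t\<in>UNIV. kap m \<mu> a t * v t b"
  have "stage_payoff p m v (dev p m \<mu> \<sigma> \<tau>) \<tau> n
      = (\<Sum>h\<in>{h. length h = Suc n}. Rf p m \<mu> \<sigma> \<tau> h * v (fst (last h)) (snd (snd (last h))))"
    unfolding stage_payoff_def by (simp add: claimA[OF \<sigma> \<tau>])
  also have "\<dots> = (\<Sum>ss\<in>?L. \<Sum>ab\<in>?AB. Rf p m \<mu> \<sigma> \<tau> (zip ss ab) * v (fst (last (zip ss ab))) (snd (snd (last (zip ss ab)))))"
    by (rule sum_len_zip)
  also have "\<dots> = (\<Sum>ss\<in>?L. \<Sum>ab\<in>?AB. \<Sum>xs\<in>?L. Gf p m \<mu> ss xs * (hp1 \<sigma> \<tau> (zip xs ab) * v (last ss) (snd (last ab))))"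
  proof (intro sum.cong refl)
    fix ss ab assume "ss \<in> ?L" "ab \<in> ?AB"
    then have l: "length ss = Suc n" "length ab = Suc n" by auto
    then have ne: "ss \<noteq> []" "ab \<noteq> []" by auto
    have lz: "last (zip ss ab) = (last ss, last ab)" using l ne by (intro last_zip) auto
    show "Rf p m \<mu> \<sigma> \<tau> (zip ss ab) * v (fst (last (zip ss ab))) (snd (snd (last (zip ss ab))))
      = (\<Sum>xs\<in>?L. Gf p m \<mu> ss xs * (hp1 \<sigma> \<tau> (zip xs ab) * v (last ss) (snd (last ab))))"
    proof -
      have "Rf p m \<mu> \<sigma> \<tau> (zip ss ab) = (\<Sum>xs\<in>?L. Gf p m \<mu> ss xs * hp1 \<sigma> \<tau> (zip xs ab))"
        unfolding Rf_def using l by simp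
      then show ?thesis by (simp add: lz sum_distrib_right mult.assoc)
    qed
  qed
  also have "\<dots> = (\<Sum>ab\<in>?AB. \<Sum>ss\<in>?L. \<Sum>xs\<in>?L. Gf p m \<mu> ss xs * (hp1 \<sigma> \<tau> (zip xs ab) * v (last ss) (snd (last ab))))"
    by (rule sum.swap)
  also have "\<dots> = (\<Sum>ab\<in>?AB. \<Sum>xs\<in>?L. \<Sum>ss\<in>?L. Gf p m \<mu> ss xs * (hp1 \<sigma> \<tau> (zip xs ab) * v (last ss) (snd (last ab))))"
    by (rule sum.cong[OF refl], rule sum.swap)
  also have "\<dots> = (\<Sum>ab\<in>?AB. \<Sum>xs\<in>?L. hp1 \<sigma> \<tau> (zip xs ab) * (chain p m xs * (\<Sum>t\<in>UNIV. kap m \<mu> (last xs) t * v t (snd (last ab)))))"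
  proof (intro sum.cong refl)
    fix ab xs assume "ab \<in> ?AB" "xs \<in> ?L"
    then have l: "length xs = Suc n" by auto
    have "(\<Sum>ss\<in>?L. Gf p m \<mu> ss xs * (hp1 \<sigma> \<tau> (zip xs ab) * v (last ss) (snd (last ab))))
        = hp1 \<sigma> \<tau> (zip xs ab) * (\<Sum>ss\<in>?L. Gf p m \<mu> ss xs * (\<lambda>t. v t (snd (last ab))) (last ss))"
      by (simp add: sum_distrib_left mult_ac)
    also have "\<dots> = hp1 \<sigma> \<tau> (zip xs ab) * (chain p m xs * (\<Sum>t\<in>UNIV. kap m \<mu> (last xs) t * v t (snd (last ab))))"
      using L[OF l, of "\<lambda>t. v t (snd (last ab))"] by simp
    finally show "(\<Sum>ss\<in>?L. Gf p m \<mu> ss xs * (hp1 \<sigma> \<tau> (zip xs ab) * v (last ss) (snd (last ab))))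
        = hp1 \<sigma> \<tau> (zip xs ab) * (chain p m xs * (\<Sum>t\<in>UNIV. kap m \<mu> (last xs) t * v t (snd (last ab))))" .
  qed
  also have "\<dots> = (\<Sum>xs\<in>?L. \<Sum>ab\<in>?AB. hp1 \<sigma> \<tau> (zip xs ab) * (chain p m xs * (\<Sum>t\<in>UNIV. kap m \<mu> (last xs) t * v t (snd (last ab)))))"
    by (rule sum.swap)
  also have "\<dots> = (\<Sum>xs\<in>?L. \<Sum>ab\<in>?AB. hist_prob p m \<sigma> \<tau> (zip xs ab) * ?F (fst (last (zip xs ab))) (snd (snd (last (zip xs ab)))))"
  proof (intro sum.cong refl)
    fix xs ab assume "xs \<in> ?L" "ab \<in> ?AB"
    then have l: "length xs = Suc n" "length ab = Suc n" by auto
    then have ne: "xs \<noteq> []" "ab \<noteq> []" by auto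
    have lz: "last (zip xs ab) = (last xs, last ab)" using l ne by (intro last_zip) auto
    show "hp1 \<sigma> \<tau> (zip xs ab) * (chain p m xs * (\<Sum>t\<in>UNIV. kap m \<mu> (last xs) t * v t (snd (last ab))))
      = hist_prob p m \<sigma> \<tau> (zip xs ab) * ?F (fst (last (zip xs ab))) (snd (snd (last (zip xs ab))))"
      using l lz by (simp add: hist_prob_factor mult_ac)
  qed
  also have "\<dots> = Exf p m \<sigma> \<tau> n ?F"
    unfolding Exf_def by (rule sum_len_zip[symmetric])
  finally show ?thesis .
qed

end
end




definition Yf where
  "Yf p m \<sigma> \<tau> \<delta> a b = (\<Sum>n. (1 - \<delta>) * \<delta> ^ n * Exf p m \<sigma> \<tau> n (ind a b))"

definition yf where
  "yf p m \<sigma> \<tau> \<delta> a b = (if m a = 0 then (if b = undefined then 1 else 0) else Yf p m \<sigma> \<tau> \<delta> a b / m a)"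

context GM begin
context
  fixes \<sigma> :: "('s,'b::finite) sender_strategy" and \<tau> :: "('s,'b) receiver_strategy" and \<delta> :: real
  assumes \<sigma>: "sender_strategy \<sigma>" and \<tau>: "receiver_strategy \<tau>" and d: "0 \<le> \<delta>" "\<delta> < 1"
begin

lemma K:
  "Upay v \<mu> (yf p m \<sigma> \<tau> \<delta>) = (\<Sum>n. (1 - \<delta>) * \<delta> ^ n * Exf p m \<sigma> \<tau> n (\<lambda>a b. \<Sum>t\<in>UNIV. kap m \<mu> a t * v t b))"
proof -
  let ?w = "\<lambda>n::nat. (1 - \<delta>) * \<delta> ^ n"
  let ?Y = "Yf p m \<sigma> \<tau> \<delta>"
  let ?C = "\<lambda>a b. \<Sum>s\<in>UNIV. kap m \<mu> a s * v s b"
  have sm: "\<And>f. summable (\<lambda>n. ?w n * Exf p m \<sigma> \<tau> n f)" by (rule Ex_summable[OF \<sigma> \<tau> d])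
  have pw: "\<And>s a b. \<mu> s a * yf p m \<sigma> \<tau> \<delta> a b = kap m \<mu> a s * ?Y a b"
    by (auto simp: yf_def kap_def mu_zero)
  have "Upay v \<mu> (yf p m \<sigma> \<tau> \<delta>) = (\<Sum>s\<in>UNIV. \<Sum>a\<in>UNIV. \<Sum>b\<in>UNIV. ?Y a b * (kap m \<mu> a s * v s b))"
    unfolding Upay_def
  proof (intro sum.cong refl)
    fix s a
    have "\<mu> s a * (\<Sum>b\<in>UNIV. yf p m \<sigma> \<tau> \<delta> a b * v s b) = (\<Sum>b\<in>UNIV. (\<mu> s a * yf p m \<sigma> \<tau> \<delta> a b) * v s b)"
      by (simp add: sum_distrib_left mult.assoc)
    also have "\<dots> = (\<Sum>b\<in>UNIV. (kap m \<mu> a s * ?Y a b) * v s b)" by (simp only: pw)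
    also have "\<dots> = (\<Sum>b\<in>UNIV. ?Y a b * (kap m \<mu> a s * v s b))" by (simp add: mult_ac)
    finally show "\<mu> s a * (\<Sum>b\<in>UNIV. yf p m \<sigma> \<tau> \<delta> a b * v s b) = (\<Sum>b\<in>UNIV. ?Y a b * (kap m \<mu> a s * v s b))" .
  qed
  also have "\<dots> = (\<Sum>a\<in>UNIV. \<Sum>s\<in>UNIV. \<Sum>b\<in>UNIV. ?Y a b * (kap m \<mu> a s * v s b))"
    by (rule sum.swap)
  also have "\<dots> = (\<Sum>a\<in>UNIV. \<Sum>b\<in>UNIV. ?Y a b * ?C a b)"
    by (rule sum.cong[OF refl], subst sum.swap) (simp add: sum_distrib_left)
  also have "\<dots> = (\<Sum>a\<in>UNIV. \<Sum>b\<in>UNIV. \<Sum>n. ?w n * Exf p m \<sigma> \<tau> n (ind a b) * ?C a b)"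
    unfolding Yf_def by (intro sum.cong refl suminf_mult2[OF sm])
  also have "\<dots> = (\<Sum>a\<in>UNIV. \<Sum>n. \<Sum>b\<in>UNIV. ?w n * Exf p m \<sigma> \<tau> n (ind a b) * ?C a b)"
    by (intro sum.cong refl suminf_sum[symmetric] summable_mult2 sm)
  also have "\<dots> = (\<Sum>n. \<Sum>a\<in>UNIV. \<Sum>b\<in>UNIV. ?w n * Exf p m \<sigma> \<tau> n (ind a b) * ?C a b)"
    by (intro suminf_sum[symmetric] summable_sum summable_mult2 sm)
  also have "\<dots> = (\<Sum>n. ?w n * Exf p m \<sigma> \<tau> n ?C)"
  proof (rule arg_cong[where f=suminf], rule ext)
    fix n
    show "(\<Sum>a\<in>UNIV. \<Sum>b\<in>UNIV. ?w n * Exf p m \<sigma> \<tau> n (ind a b) * ?C a b) = ?w n * Exf p m \<sigma> \<tau> n ?C"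
      using Ex_lin[of \<sigma> \<tau> n ?C] by (simp add: sum_distrib_left mult_ac)
  qed
  finally show ?thesis .
qed

end
end




lemma geo1:
  fixes \<delta> K :: real
  assumes "0 \<le> \<delta>" "\<delta> < 1"
  shows "(\<Sum>n. (1 - \<delta>) * \<delta> ^ n * K) = K"
proof -
  have "(\<lambda>n. (1 - \<delta>) * \<delta> ^ n * K) = (\<lambda>n. \<delta> ^ n * ((1 - \<delta>) * K))" by (simp add: mult_ac)
  moreover have "(\<Sum>n. \<delta> ^ n * ((1 - \<delta>) * K)) = (\<Sum>n. \<delta> ^ n) * ((1 - \<delta>) * K)"
    by (rule suminf_mult2[symmetric]) (rule summable_geometric, use assms in simp)
  moreover have "(\<Sum>n. \<delta> ^ n) = 1 / (1 - \<delta>)" by (rule suminf_geometric) (use assms in simp)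
  ultimately show ?thesis using assms by simp
qed

lemma (in G) recv_stage:
  fixes \<sigma> :: "('s,'b::finite) sender_strategy" and u :: "'s \<Rightarrow> 'b \<Rightarrow> real" and b :: 'b
  assumes \<sigma>: "sender_strategy \<sigma>"
  shows "stage_payoff p m u \<sigma> (\<lambda>h a b'. if b' = b then 1 else 0) n = (\<Sum>s\<in>UNIV. m s * u s b)"
proof -
  let ?\<tau> = "(\<lambda>h a b'. if b' = b then 1 else 0) :: ('s,'b) receiver_strategy"
  have \<tau>: "receiver_strategy ?\<tau>" by (simp add: receiver_strategy_def distribution_def)
  have "stage_payoff p m u \<sigma> ?\<tau> n = Exf p m \<sigma> ?\<tau> n (\<lambda>a b'. u a b)"
    unfolding stage_payoff_def Exf_def
  proof (rule sum.cong[OF refl])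
    fix h :: "('s \<times> 's \<times> 'b) list" assume "h \<in> {h. length h = Suc n}"
    then have "h \<noteq> []" by auto
    then obtain h0 s a b' where h: "h = h0 @ [(s,a,b')]" by (metis rev_exhaust prod_cases3)
    show "hist_prob p m \<sigma> ?\<tau> h * u (fst (last h)) (snd (snd (last h))) = hist_prob p m \<sigma> ?\<tau> h * u (fst (last h)) b"
      by (cases "b' = b") (simp_all add: h hist_prob_snoc)
  qed
  also have "\<dots> = (\<Sum>s\<in>UNIV. m s * u s b)" by (rule marg[OF \<sigma> \<tau>])
  finally show ?thesis .
qed

theorem theorem2:
  fixes p :: "'s::finite \<Rightarrow> 's \<Rightarrow> real"
    and m :: "'s \<Rightarrow> real"
    and u1 u2 :: "'s \<Rightarrow> 'b::finite \<Rightarrow> real"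
    and \<delta> :: real
  assumes "stochastic_matrix p"
    and "irreducible_chain p"
    and "aperiodic_chain p"
    and "invariant_measure p m"
    and "assumption_A p"
    and "0 < \<delta>" and "\<delta> < 1"
  shows "NE p m \<delta> u1 u2 \<subseteq> EM m u1 u2"
proof
  fix x assume "x \<in> NE p m \<delta> u1 u2"
  then obtain \<sigma> \<tau> where x: "x = (disc_payoff p m \<delta> u1 \<sigma> \<tau>, disc_payoff p m \<delta> u2 \<sigma> \<tau>)"
     and ne: "nash_eq p m \<delta> u1 u2 \<sigma> \<tau>" unfolding NE_def by blast
  from ne have \<sigma>: "sender_strategy \<sigma>" and \<tau>: "receiver_strategy \<tau>"
     and BR1: "\<forall>\<sigma>'. sender_strategy \<sigma>' \<longrightarrow> disc_payoff p m \<delta> u1 \<sigma>' \<tau> \<le> disc_payoff p m \<delta> u1 \<sigma> \<tau>"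
     and BR2: "\<forall>\<tau>'. receiver_strategy \<tau>' \<longrightarrow> disc_payoff p m \<delta> u2 \<sigma> \<tau>' \<le> disc_payoff p m \<delta> u2 \<sigma> \<tau>"
    unfolding nash_eq_def by auto
  interpret G p m using assms(1,4) by unfold_locales
  obtain c where pf: "\<forall>t t'. p t t' = c * m t' + (if t = t' then 1 - c else 0)"
    using pform[OF assms(5)] by blast
  have d: "0 \<le> \<delta>" "\<delta> < 1" using assms by auto
  let ?y = "yf p m \<sigma> \<tau> \<delta>"
  let ?w = "\<lambda>n::nat. (1 - \<delta>) * \<delta> ^ n"
  have mu0M: "mu0 m \<in> Mset m"
    unfolding Mset_def mu0_def by (auto simp: m_nonneg)
  interpret M0: GM p m "mu0 m" c using mu0M pf by unfold_locales auto
  have kap0: "(\<Sum>t\<in>UNIV. kap m (mu0 m) a t * v t b) = v a b" if "m a \<noteq> 0" for a b and v :: "'s \<Rightarrow> 'b \<Rightarrow> real"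
  proof -
    have "(\<Sum>t\<in>UNIV. kap m (mu0 m) a t * v t b) = (\<Sum>t\<in>UNIV. if t = a then v a b else 0)"
      by (rule sum.cong) (use that in \<open>auto simp: kap_def mu0_def\<close>)
    then show ?thesis by simp
  qed
  have disc_eq: "disc_payoff p m \<delta> v \<sigma> \<tau> = Upay v (mu0 m) ?y" for v :: "'s \<Rightarrow> 'b \<Rightarrow> real"
  proof -
    have "Upay v (mu0 m) ?y = (\<Sum>n. ?w n * Exf p m \<sigma> \<tau> n (\<lambda>a b. \<Sum>t\<in>UNIV. kap m (mu0 m) a t * v t b))"
      by (rule M0.K[OF \<sigma> \<tau> d])
    also have "\<dots> = (\<Sum>n. ?w n * Exf p m \<sigma> \<tau> n v)"
    proof -
      have "\<And>n. Exf p m \<sigma> \<tau> n (\<lambda>a b. \<Sum>t\<in>UNIV. kap m (mu0 m) a t * v t b) = Exf p m \<sigma> \<tau> n v"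
        by (rule Ex_cong_m[OF \<sigma> \<tau>]) (rule kap0)
      then show ?thesis by simp
    qed
    also have "\<dots> = disc_payoff p m \<delta> v \<sigma> \<tau>"
      by (simp add: disc_payoff_def stage_payoff_def Exf_def)
    finally show ?thesis by simp
  qed
  have IC: "\<forall>\<mu>\<in>Mset m. Upay u1 \<mu> ?y \<le> Upay u1 (mu0 m) ?y"
  proof
    fix \<mu> assume \<mu>: "\<mu> \<in> Mset m"
    interpret M: GM p m \<mu> c using \<mu> pf by unfold_locales auto
    have "Upay u1 \<mu> ?y = (\<Sum>n. ?w n * Exf p m \<sigma> \<tau> n (\<lambda>a b. \<Sum>t\<in>UNIV. kap m \<mu> a t * u1 t b))"
      by (rule M.K[OF \<sigma> \<tau> d])
    also have "\<dots> = disc_payoff p m \<delta> u1 (dev p m \<mu> \<sigma> \<tau>) \<tau>"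
      by (simp add: disc_payoff_def M.dev_stage[OF \<sigma> \<tau>])
    also have "\<dots> \<le> disc_payoff p m \<delta> u1 \<sigma> \<tau>" using BR1 M.dev_strategy[OF \<sigma> \<tau>] by blast
    finally show "Upay u1 \<mu> ?y \<le> Upay u1 (mu0 m) ?y" using disc_eq[of u1] by simp
  qed
  have V2: "v2 m u2 \<le> Upay u2 (mu0 m) ?y"
  proof -
    have "v2 m u2 \<in> range (\<lambda>b. \<Sum>s\<in>UNIV. m s * u2 s b)" unfolding v2_def by (rule Max_in) auto
    then obtain b where vb: "v2 m u2 = (\<Sum>s\<in>UNIV. m s * u2 s b)" by auto
    let ?\<tau>b = "(\<lambda>h a b'. if b' = b then 1 else 0) :: ('s,'b) receiver_strategy"
    have \<tau>b: "receiver_strategy ?\<tau>b" by (simp add: receiver_strategy_def distribution_def)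
    have "disc_payoff p m \<delta> u2 \<sigma> ?\<tau>b = (\<Sum>n. ?w n * (\<Sum>s\<in>UNIV. m s * u2 s b))"
      by (simp add: disc_payoff_def recv_stage[OF \<sigma>])
    also have "\<dots> = v2 m u2" using geo1[OF d] vb by simp
    finally have "v2 m u2 = disc_payoff p m \<delta> u2 \<sigma> ?\<tau>b" by simp
    also have "\<dots> \<le> disc_payoff p m \<delta> u2 \<sigma> \<tau>" using BR2 \<tau>b by blast
    finally show ?thesis using disc_eq[of u2] by simp
  qed
  have ydist: "\<forall>a. distribution (?y a)"
  proof
    fix a
    show "distribution (?y a)"
    proof (cases "m a = 0")
      case True then show ?thesis by (simp add: yf_def distribution_def)
    next
      case False
      then have ma: "0 < m a" using m_nonneg[of a] by simp
      have sm: "\<And>f. summable (\<lambda>n. ?w n * Exf p m \<sigma> \<tau> n f)" by (rule Ex_summable[OF \<sigma> \<tau> d])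
      have Ynn: "0 \<le> Yf p m \<sigma> \<tau> \<delta> a b" for b
        unfolding Yf_def
        by (rule suminf_nonneg[OF sm]) (use d in \<open>auto intro!: mult_nonneg_nonneg Ex_nonneg[OF \<sigma> \<tau>]\<close>)
      have Ex1: "(\<Sum>b\<in>UNIV. Exf p m \<sigma> \<tau> n (ind a b)) = m a" for n
      proof -
        have "Exf p m \<sigma> \<tau> n (\<lambda>a' b'. if a' = a then 1 else 0) = (\<Sum>s\<in>UNIV. m s * (if s = a then 1 else 0))"
          by (rule marg[OF \<sigma> \<tau>])
        also have "\<dots> = m a" by (simp add: if_distrib cong: if_cong)
        finally have e1: "Exf p m \<sigma> \<tau> n (\<lambda>a' b'. if a' = a then 1 else 0) = m a" .
        have "Exf p m \<sigma> \<tau> n (\<lambda>a' b'. if a' = a then 1 else 0) = (\<Sum>a'\<in>UNIV. \<Sum>b\<in>UNIV. (if a' = a then 1 else 0) * Exf p m \<sigma> \<tau> n (ind a' b))"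
          by (rule Ex_lin)
        also have "\<dots> = (\<Sum>a'\<in>UNIV. if a' = a then (\<Sum>b\<in>UNIV. Exf p m \<sigma> \<tau> n (ind a' b)) else 0)"
          by (rule sum.cong) auto
        also have "\<dots> = (\<Sum>b\<in>UNIV. Exf p m \<sigma> \<tau> n (ind a b))"
          by simp
        finally show ?thesis using e1 by simp
      qed
      have "(\<Sum>b\<in>UNIV. Yf p m \<sigma> \<tau> \<delta> a b) = (\<Sum>n. \<Sum>b\<in>UNIV. ?w n * Exf p m \<sigma> \<tau> n (ind a b))"
        unfolding Yf_def by (rule suminf_sum[symmetric]) (rule sm)
      also have "\<dots> = (\<Sum>n. ?w n * m a)"
        by (simp add: sum_distrib_left[symmetric] Ex1)
      also have "\<dots> = m a" by (rule geo1[OF d])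
      finally have S: "(\<Sum>b\<in>UNIV. Yf p m \<sigma> \<tau> \<delta> a b) = m a" .
      show ?thesis
        unfolding distribution_def yf_def using False ma Ynn
        by (auto simp: sum_divide_distrib[symmetric] S)
    qed
  qed
  show "x \<in> EM m u1 u2"
    unfolding EM_def x disc_eq using IC V2 ydist by blast
qed


end
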